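(* Under the standing setup with $\mathrm{Var}(X_N)>0$, if contextual reinforcement holds ($\delta_W\cdot\delta_B\ge0$), then $D\ge 0$ if and only if $D_{ER}\ge D_{NM}$.
   Context: Let $(X,Y,N)$ be a random triple with $X\in\{0,1\}$, $Y$ real-valued, $N$ taking values in a finite set $\mathcal N$. Write $X_n=\mathbb E[X\mid N=n]$, $X_N=\mathbb E[X\mid N]$, $Y_N=\mathbb E[Y\mid N]$. Assume some $n$ has $\Pr(N=n)>0$ and $X_n\in(0,1)$, and $\mathbb E[Y\mid X=x,N=n]\in[\underline Y,\overline Y]$ whenever $\Pr(X=x,N=n)>0$. $D=\mathbb E[Y\mid X=1]-\mathbb E[Y\mid X=0]$; $\delta_B=\mathbb E[\mathrm{Cov}(Y,X\mid N)]$; $\delta_W=\mathbb E[\mathrm{Cov}(Y,X_N\mid X)]$; $D_{ER}=\mathrm{Cov}(Y_N,X_N)/\mathrm{Var}(X_N)$; $D_{NM}=\mathbb E[X_NY_N]/\mathbb E[X_N]-\mathbb E[(1-X_N)Y_N]/\mathbb E[1-X_N]$. *)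

theory Defs
  imports "HOL-Probability.Probability"
begin

text \<open>Conditional expectation of Z given an event A (ratio form; 0 if P(A)=0).\<close>
definition cexp :: "'a measure \<Rightarrow> ('a \<Rightarrow> real) \<Rightarrow> 'a set \<Rightarrow> real" where
  "cexp M Z A = (\<integral>\<omega>. Z \<omega> * indicator A \<omega> \<partial>M) / measure M A"

definition ev :: "'a measure \<Rightarrow> ('a \<Rightarrow> 'b) \<Rightarrow> 'b \<Rightarrow> 'a set" where
  "ev M V v = {\<omega> \<in> space M. V \<omega> = v}"

definition condE :: "'a measure \<Rightarrow> ('a \<Rightarrow> real) \<Rightarrow> ('a \<Rightarrow> 'b) \<Rightarrow> 'a \<Rightarrow> real" where
  "condE M Z V \<omega> = cexp M Z (ev M V (V \<omega>))"

definition condCov :: "'a measure \<Rightarrow> ('a \<Rightarrow> real) \<Rightarrow> ('a \<Rightarrow> real) \<Rightarrow> ('a \<Rightarrow> 'b) \<Rightarrow> 'a \<Rightarrow> real" where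
  "condCov M U W V \<omega> = condE M (\<lambda>x. U x * W x) V \<omega> - condE M U V \<omega> * condE M W V \<omega>"

definition cov :: "'a measure \<Rightarrow> ('a \<Rightarrow> real) \<Rightarrow> ('a \<Rightarrow> real) \<Rightarrow> real" where
  "cov M U W = (\<integral>x. U x * W x \<partial>M) - (\<integral>x. U x \<partial>M) * (\<integral>x. W x \<partial>M)"

definition var :: "'a measure \<Rightarrow> ('a \<Rightarrow> real) \<Rightarrow> real" where
  "var M U = (\<integral>x. (U x - (\<integral>y. U y \<partial>M))\<^sup>2 \<partial>M)"

end

theory Submission imports Defs begin

lemma ev_sets:
  assumes "X \<in> borel_measurable M" shows "ev M X (x::real) \<in> sets M"
proof -
  have "ev M X x = X -` {x} \<inter> space M" by (auto simp: ev_def)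
  thus ?thesis using assms by (simp add: measurable_sets)
qed

lemma evN_sets:
  assumes "N \<in> measurable M (count_space UNIV)" shows "ev M N n \<in> sets M"
proof -
  have "ev M N n = N -` {n} \<inter> space M" by (auto simp: ev_def)
  thus ?thesis using assms by (simp add: measurable_sets)
qed

lemma null_int:
  assumes "prob_space M" "A \<in> sets M" "measure M A = 0"
  shows "(\<integral>\<omega>. Z \<omega> * indicator A \<omega> \<partial>M) = (0::real)"
proof -
  interpret prob_space M by fact
  have "A \<in> null_sets M" using assms by (simp add: emeasure_eq_measure null_sets_def)
  hence "AE \<omega> in M. \<omega> \<notin> A" by (rule AE_not_in)
  hence "AE \<omega> in M. Z \<omega> * indicator A \<omega> = 0" by eventually_elim simp
  thus ?thesis by (rule integral_eq_zero_AE)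
qed

lemma sum_ind:
  "(\<Sum>n\<in>(UNIV::'n::finite set). f n * (z * (if a = n then 1 else 0))) = f a * (z::real)"
proof -
  have "(\<Sum>n\<in>(UNIV::'n set). f n * (z * (if a = n then 1 else 0))) = (\<Sum>n\<in>UNIV. if a = n then f n * z else 0)"
    by (rule sum.cong) auto
  thus ?thesis by simp
qed

lemma sum_if1:
  "(\<Sum>m\<in>(UNIV::'n::finite set). (if m = n then 1 else 0) * f m) = (f n::real)"
proof -
  have "(\<Sum>m\<in>(UNIV::'n set). (if m = n then 1 else 0) * f m) = (\<Sum>m\<in>UNIV. if m = n then f m else 0)"
    by (rule sum.cong) auto
  thus ?thesis by simp
qed

lemma partition_int:
  fixes X Z :: "'a \<Rightarrow> real" and N :: "'a \<Rightarrow> 'n::finite"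
  assumes "X \<in> borel_measurable M" "\<forall>\<omega>\<in>space M. X \<omega> \<in> {0, 1}"
    and "N \<in> measurable M (count_space UNIV)" and "integrable M Z"
    and "\<forall>\<omega>\<in>space M. F \<omega> = Z \<omega> * g (X \<omega>) (N \<omega>)"
  shows "integral\<^sup>L M F = (\<Sum>n\<in>UNIV. g 0 n * (\<integral>\<omega>. Z \<omega> * indicator (ev M X 0 \<inter> ev M N n) \<omega> \<partial>M)
              + g 1 n * (\<integral>\<omega>. Z \<omega> * indicator (ev M X 1 \<inter> ev M N n) \<omega> \<partial>M))"
proof -
  have S: "\<And>x n. ev M X x \<inter> ev M N n \<in> sets M" using ev_sets[OF assms(1)] evN_sets[OF assms(3)] by blast
  have I: "\<And>x n. integrable M (\<lambda>\<omega>. Z \<omega> * indicator (ev M X x \<inter> ev M N n) \<omega>)"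
    using S assms(4) by (rule integrable_real_mult_indicator)
  have "integral\<^sup>L M F = (\<integral>\<omega>. (\<Sum>n\<in>UNIV. g 0 n * (Z \<omega> * indicator (ev M X 0 \<inter> ev M N n) \<omega>)
              + g 1 n * (Z \<omega> * indicator (ev M X 1 \<inter> ev M N n) \<omega>)) \<partial>M)"
  proof (rule Bochner_Integration.integral_cong[OF refl])
    fix \<omega> assume w: "\<omega> \<in> space M"
    have e: "\<And>x n. indicator (ev M X x \<inter> ev M N n) \<omega> = (if X \<omega> = x \<and> N \<omega> = n then 1 else (0::real))"
      using w by (auto simp: ev_def indicator_def)
    show "F \<omega> = (\<Sum>n\<in>UNIV. g 0 n * (Z \<omega> * indicator (ev M X 0 \<inter> ev M N n) \<omega>)
              + g 1 n * (Z \<omega> * indicator (ev M X 1 \<inter> ev M N n) \<omega>))"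
    proof -
      have F: "F \<omega> = Z \<omega> * g (X \<omega>) (N \<omega>)" using w assms(5) by auto
      have "X \<omega> = 0 \<or> X \<omega> = 1" using w assms(2) by auto
      thus ?thesis
      proof
        assume h: "X \<omega> = 0"
        show ?thesis unfolding e F h by (simp add: sum_ind mult.commute)
      next
        assume h: "X \<omega> = 1"
        show ?thesis unfolding e F h by (simp add: sum_ind mult.commute)
      qed
    qed
  qed
  also have "\<dots> = (\<Sum>n\<in>UNIV. g 0 n * (\<integral>\<omega>. Z \<omega> * indicator (ev M X 0 \<inter> ev M N n) \<omega> \<partial>M)
              + g 1 n * (\<integral>\<omega>. Z \<omega> * indicator (ev M X 1 \<inter> ev M N n) \<omega> \<partial>M))"
    using I by (simp add: integral_add integral_mult_right_zero)
  finally show ?thesis .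
qed
lemma alg:
  fixes p1 b0 b1 a0 a1 c1 :: real
  assumes p: "0 < p1" "p1 < 1" and V: "0 < c1 - p1^2" "c1 < p1"
    and prod: "((1-p1) * (a0/(1-p1) - b0/(1-p1) * ((p1 - c1)/(1-p1))) + p1 * (a1/p1 - b1/p1 * (c1/p1))) * (b1 - (a0+a1)) \<ge> 0"
  shows "b1/p1 - b0/(1-p1) \<ge> 0 \<longleftrightarrow>
    ((a0+a1) - (b0+b1)*p1)/(c1 - p1^2) \<ge> (a0+a1)/p1 - (b0+b1-(a0+a1))/(1-p1)"
proof -
  define p0 where "p0 = 1 - p1"
  have p0: "0 < p0" using p by (simp add: p0_def)
  define D where "D = b1/p1 - b0/p0"
  define C where "C = (a0+a1) - (b0+b1)*p1"
  define V where "V = c1 - p1^2"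
  have V0: "0 < V" "V < p0*p1" using V by (auto simp: V_def p0_def power2_eq_square algebra_simps)
  have nz: "1 - p1 \<noteq> 0" "p1 \<noteq> 0" using p by auto
  have t1: "(1-p1) * (a0/(1-p1) - b0/(1-p1) * ((p1 - c1)/(1-p1))) = a0 - b0*(p1-c1)/p0"
  proof -
    have g: "\<And>q a b r::real. q \<noteq> 0 \<Longrightarrow> q*(a/q - b/q*(r/q)) = a - b*r/q" by (simp add: field_simps power2_eq_square)
    show ?thesis using g[OF nz(1)] by (simp add: p0_def)
  qed
  have t2: "p1 * (a1/p1 - b1/p1 * (c1/p1)) = a1 - b1*c1/p1"
    using nz by (simp add: field_simps power2_eq_square)
  have t3: "a0 - b0*(p1-c1)/p0 + (a1 - b1*c1/p1) = C - D*V"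
  proof -
    have e: "p1 = 1 - p0" by (simp add: p0_def)
    have "p0 * p1 * (a0 - b0*(p1-c1)/p0 + (a1 - b1*c1/p1)) = p0 * p1 * (C - D*V)"
      using nz p0 unfolding C_def D_def V_def by (simp add: field_simps power2_eq_square) (simp add: e algebra_simps)
    thus ?thesis using nz p0 by simp
  qed
  have dW: "(1-p1) * (a0/(1-p1) - b0/(1-p1) * ((p1 - c1)/(1-p1))) + p1 * (a1/p1 - b1/p1 * (c1/p1)) = C - D*V"
    using t1 t2 t3 by simp
  have dB: "b1 - (a0+a1) = D*p0*p1 - C"
    using nz unfolding C_def D_def p0_def by (simp add: field_simps)
  have R: "(a0+a1)/p1 - (b0+b1-(a0+a1))/(1-p1) = C/(p0*p1)"
    using nz unfolding C_def p0_def by (simp add: field_simps)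
  have pr: "(C - D*V) * (D*p0*p1 - C) \<ge> 0" using prod dW dB by simp
  have DC: "D \<ge> 0 \<longleftrightarrow> C \<ge> 0"
  proof
    assume "D \<ge> 0" show "C \<ge> 0"
    proof (rule ccontr)
      assume "\<not> C \<ge> 0"
      moreover have "D*V \<ge> 0" "D*p0*p1 \<ge> 0" using \<open>D\<ge>0\<close> V0 p0 p by auto
      ultimately have "C - D*V < 0" "D*p0*p1 - C > 0" by auto
      hence "(C - D*V) * (D*p0*p1 - C) < 0" by (simp add: mult_neg_pos)
      thus False using pr by simp
    qed
  next
    assume "C \<ge> 0" show "D \<ge> 0"
    proof (rule ccontr)
      assume "\<not> D \<ge> 0"
      hence "D*V < 0" "D*(p0*p1) < 0" using V0 p0 p by (auto simp: mult_neg_pos)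
      hence "C - D*V > 0" "D*p0*p1 - C < 0" using \<open>C\<ge>0\<close> by (auto simp: mult.assoc)
      hence "(C - D*V) * (D*p0*p1 - C) < 0" by (simp add: mult_pos_neg)
      thus False using pr by simp
    qed
  qed
  have CV: "C/V \<ge> C/(p0*p1) \<longleftrightarrow> C \<ge> 0"
  proof
    assume h: "C/V \<ge> C/(p0*p1)" show "C \<ge> 0"
    proof (rule ccontr)
      assume "\<not> C \<ge> 0"
      hence "C/V < C/(p0*p1)" using V0 p0 p by (simp add: divide_strict_left_mono_neg mult_pos_pos)
      thus False using h by simp
    qed
  next
    assume "C \<ge> 0" thus "C/V \<ge> C/(p0*p1)" using V0 by (simp add: divide_left_mono)
  qed
  show ?thesis unfolding R using DC CV by (simp add: D_def C_def V_def p0_def)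
qed

theorem corollary3:
  fixes M :: "'a measure" and X Y :: "'a \<Rightarrow> real" and N :: "'a \<Rightarrow> 'n::finite"
    and Ylo Yhi :: real
  assumes "prob_space M"
    and "X \<in> borel_measurable M" and "\<forall>\<omega>\<in>space M. X \<omega> \<in> {0, 1}"
    and "integrable M Y"
    and "N \<in> measurable M (count_space UNIV)"
    and "\<exists>n. measure M (ev M N n) > 0 \<and> 0 < cexp M X (ev M N n) \<and> cexp M X (ev M N n) < 1"
    and "\<forall>x n. measure M (ev M X x \<inter> ev M N n) > 0 \<longrightarrow>
            cexp M Y (ev M X x \<inter> ev M N n) \<in> {Ylo..Yhi}"
    and "var M (condE M X N) > 0"
    and "(\<integral>\<omega>. condCov M Y (condE M X N) X \<omega> \<partial>M) * (\<integral>\<omega>. condCov M Y X N \<omega> \<partial>M) \<ge> 0"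
  shows "cexp M Y (ev M X 1) - cexp M Y (ev M X 0) \<ge> 0 \<longleftrightarrow>
         cov M (condE M Y N) (condE M X N) / var M (condE M X N) \<ge>
           (\<integral>\<omega>. condE M X N \<omega> * condE M Y N \<omega> \<partial>M) / (\<integral>\<omega>. condE M X N \<omega> \<partial>M)
           - (\<integral>\<omega>. (1 - condE M X N \<omega>) * condE M Y N \<omega> \<partial>M) / (\<integral>\<omega>. 1 - condE M X N \<omega> \<partial>M)"
  proof -
  interpret prob_space M by fact
  note Xm = assms(2) and X01 = assms(3) and Yi = assms(4) and Nm = assms(5)
  define A where "A x n = ev M X x \<inter> ev M N n" for x n
  define q where "q x n = measure M (A x n)" for x n
  define s where "s x n = (\<integral>\<omega>. Y \<omega> * indicator (A x n) \<omega> \<partial>M)" for x n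
  define pi where "pi n = q 0 n + q 1 n" for n
  have SA: "\<And>x n. A x n \<in> sets M" unfolding A_def using ev_sets[OF Xm] evN_sets[OF Nm] by blast
  have PI1: "integral\<^sup>L M F = (\<Sum>n\<in>UNIV. g 0 n * q 0 n + g 1 n * q 1 n)"
    if h: "\<forall>\<omega>\<in>space M. F \<omega> = g (X \<omega>) (N \<omega>)" for F :: "'a \<Rightarrow> real" and g :: "real \<Rightarrow> 'n \<Rightarrow> real"
  proof -
    have "integral\<^sup>L M F = (\<Sum>n\<in>UNIV. g 0 n * (\<integral>\<omega>. 1 * indicator (A 0 n) \<omega> \<partial>M) + g 1 n * (\<integral>\<omega>. 1 * indicator (A 1 n) \<omega> \<partial>M))"
      unfolding A_def by (rule partition_int[OF Xm X01 Nm]) (use h in auto)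
    moreover have "\<And>x n. (\<integral>\<omega>. 1 * indicator (A x n) \<omega> \<partial>M) = q x n"
      using SA sets.sets_into_space by (simp add: q_def Int_absorb2)
    ultimately show ?thesis by simp
  qed
  have PIY: "integral\<^sup>L M F = (\<Sum>n\<in>UNIV. g 0 n * s 0 n + g 1 n * s 1 n)"
    if h: "\<forall>\<omega>\<in>space M. F \<omega> = Y \<omega> * g (X \<omega>) (N \<omega>)" for F :: "'a \<Rightarrow> real" and g :: "real \<Rightarrow> 'n \<Rightarrow> real"
    unfolding s_def A_def by (rule partition_int[OF Xm X01 Nm Yi h])
  have PIN: "integral\<^sup>L M F = (\<Sum>n\<in>UNIV. f n * pi n)"
    if h: "\<forall>\<omega>\<in>space M. F \<omega> = f (N \<omega>)" for F :: "'a \<Rightarrow> real" and f :: "'n \<Rightarrow> real"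
  proof -
    have "integral\<^sup>L M F = (\<Sum>n\<in>UNIV. f n * q 0 n + f n * q 1 n)"
      by (rule PI1[of F "\<lambda>x n. f n"]) (use h in auto)
    thus ?thesis by (simp add: pi_def distrib_left)
  qed
  have qnn: "\<And>x n. q x n \<ge> 0" by (simp add: q_def)
  have pinn: "\<And>n. pi n \<ge> 0" using qnn by (simp add: pi_def add_nonneg_nonneg)
  have pi0: "\<And>n x. pi n = 0 \<Longrightarrow> q x n = 0"
  proof -
    fix n x assume "pi n = 0"
    hence "q 0 n = 0" "q 1 n = 0" using qnn[of 0 n] qnn[of 1 n] by (auto simp: pi_def)
    moreover have "x \<noteq> 0 \<Longrightarrow> x \<noteq> 1 \<Longrightarrow> A x n = {}" using X01 by (auto simp: A_def ev_def)
    ultimately show "q x n = 0" by (cases "x = 0"; cases "x = 1") (auto simp: q_def)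
  qed
  have spi0: "\<And>n x. pi n = 0 \<Longrightarrow> s x n = 0"
    unfolding s_def by (rule null_int[OF assms(1) SA]) (use pi0 q_def in auto)
  have mN: "\<And>n. measure M (ev M N n) = pi n"
  proof -
    fix n
    have "measure M (ev M N n) = integral\<^sup>L M (indicator (ev M N n))" by (simp add: ev_def Int_absorb2)
    also have "\<dots> = (\<Sum>m\<in>UNIV. (\<lambda>m. if m = n then 1 else 0) m * pi m)"
      by (rule PIN) (auto simp: ev_def indicator_def)
    also have "\<dots> = pi n" by (simp only: sum_if1)
    finally show "measure M (ev M N n) = pi n" .
  qed
  define xN where "xN n = cexp M X (ev M N n)" for n
  define yN where "yN n = cexp M Y (ev M N n)" for n
  define yxN where "yxN n = cexp M (\<lambda>\<omega>. Y \<omega> * X \<omega>) (ev M N n)" for n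
  have xN_eq: "xN n = q 1 n / pi n" for n
  proof -
    have "(\<integral>\<omega>. X \<omega> * indicator (ev M N n) \<omega> \<partial>M) = (\<Sum>m\<in>UNIV. (\<lambda>x m. (if m = n then 1 else 0) * x) 0 m * q 0 m + (\<lambda>x m. (if m = n then 1 else 0) * x) 1 m * q 1 m)"
      by (rule PI1) (auto simp: ev_def indicator_def)
    also have "\<dots> = q 1 n" by (simp add: sum_if1)
    finally show ?thesis by (simp add: xN_def cexp_def mN)
  qed
  have yN_eq: "yN n = (s 0 n + s 1 n) / pi n" for n
  proof -
    have "(\<integral>\<omega>. Y \<omega> * indicator (ev M N n) \<omega> \<partial>M) = (\<Sum>m\<in>UNIV. (\<lambda>x m. (if m = n then 1 else 0)) 0 m * s 0 m + (\<lambda>x m. (if m = n then 1 else 0)) 1 m * s 1 m)"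
      by (rule PIY) (auto simp: ev_def indicator_def)
    also have "\<dots> = s 0 n + s 1 n" by (simp add: sum_if1 sum.distrib distrib_left[symmetric])
    finally show ?thesis by (simp add: yN_def cexp_def mN)
  qed
  have yxN_eq: "yxN n = s 1 n / pi n" for n
  proof -
    have "(\<integral>\<omega>. Y \<omega> * X \<omega> * indicator (ev M N n) \<omega> \<partial>M) = (\<Sum>m\<in>UNIV. (\<lambda>x m. (if m = n then 1 else 0) * x) 0 m * s 0 m + (\<lambda>x m. (if m = n then 1 else 0) * x) 1 m * s 1 m)"
      by (rule PIY) (auto simp: ev_def indicator_def)
    also have "\<dots> = s 1 n" by (simp add: sum_if1)
    finally show ?thesis by (simp add: yxN_def cexp_def mN)
  qed
  have e1: "pi n * xN n = q 1 n" for n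
    using pi0[of n 1] by (cases "pi n = 0") (auto simp: xN_eq)
  have e2: "pi n * yN n = s 0 n + s 1 n" for n
    using spi0[of n 1] spi0[of n 0] by (cases "pi n = 0") (auto simp: yN_eq)
  have e3: "pi n * yxN n = s 1 n" for n
    using spi0[of n 1] by (cases "pi n = 0") (auto simp: yxN_eq)
  have xN01: "0 \<le> xN n" "xN n \<le> 1" for n
    using qnn[of 0 n] qnn[of 1 n] by (auto simp: xN_eq pi_def divide_le_eq_1)
  define p0 where "p0 = (\<Sum>n\<in>UNIV. q 0 n)"
  define p1 where "p1 = (\<Sum>n\<in>UNIV. q 1 n)"
  define b0 where "b0 = (\<Sum>n\<in>UNIV. s 0 n)"
  define b1 where "b1 = (\<Sum>n\<in>UNIV. s 1 n)"
  define a0 where "a0 = (\<Sum>n\<in>UNIV. xN n * s 0 n)"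
  define a1 where "a1 = (\<Sum>n\<in>UNIV. xN n * s 1 n)"
  define c0 where "c0 = (\<Sum>n\<in>UNIV. xN n * q 0 n)"
  define c1 where "c1 = (\<Sum>n\<in>UNIV. xN n * q 1 n)"
  have cXN: "condE M X N \<omega> = xN (N \<omega>)" for \<omega> by (simp add: condE_def xN_def)
  have cYN: "condE M Y N \<omega> = yN (N \<omega>)" for \<omega> by (simp add: condE_def yN_def)
  have cYXN: "condE M (\<lambda>x. Y x * X x) N \<omega> = yxN (N \<omega>)" for \<omega> by (simp add: condE_def yxN_def)
  have mX0: "measure M (ev M X 0) = p0"
  proof -
    have "measure M (ev M X 0) = integral\<^sup>L M (indicator (ev M X 0))" by (simp add: ev_def Int_absorb2)
    also have "\<dots> = (\<Sum>n\<in>UNIV. (\<lambda>(x::real) m. if x = 0 then 1 else 0) 0 n * q 0 n + (\<lambda>(x::real) m. if x = 0 then 1 else 0) 1 n * q 1 n)"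
      by (rule PI1[of _ "\<lambda>(x::real) m. if x = 0 then 1 else 0"]) (auto simp: ev_def indicator_def)
    finally show ?thesis by (simp add: p0_def)
  qed
  have mX1: "measure M (ev M X 1) = p1"
  proof -
    have "measure M (ev M X 1) = integral\<^sup>L M (indicator (ev M X 1))" by (simp add: ev_def Int_absorb2)
    also have "\<dots> = (\<Sum>n\<in>UNIV. (\<lambda>(x::real) m. if x = 1 then 1 else 0) 0 n * q 0 n + (\<lambda>(x::real) m. if x = 1 then 1 else 0) 1 n * q 1 n)"
      by (rule PI1[of _ "\<lambda>(x::real) m. if x = 1 then 1 else 0"]) (auto simp: ev_def indicator_def)
    finally show ?thesis by (simp add: p1_def)
  qed
  have iY0: "(\<integral>\<omega>. Y \<omega> * indicator (ev M X 0) \<omega> \<partial>M) = b0"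
  proof -
    have "(\<integral>\<omega>. Y \<omega> * indicator (ev M X 0) \<omega> \<partial>M) = (\<Sum>n\<in>UNIV. (\<lambda>(x::real) m. if x = 0 then 1 else 0) 0 n * s 0 n + (\<lambda>(x::real) m. if x = 0 then 1 else 0) 1 n * s 1 n)"
      by (rule PIY[of _ "\<lambda>(x::real) m. if x = 0 then 1 else 0"]) (auto simp: ev_def indicator_def)
    thus ?thesis by (simp add: b0_def)
  qed
  have iY1: "(\<integral>\<omega>. Y \<omega> * indicator (ev M X 1) \<omega> \<partial>M) = b1"
  proof -
    have "(\<integral>\<omega>. Y \<omega> * indicator (ev M X 1) \<omega> \<partial>M) = (\<Sum>n\<in>UNIV. (\<lambda>(x::real) m. if x = 1 then 1 else 0) 0 n * s 0 n + (\<lambda>(x::real) m. if x = 1 then 1 else 0) 1 n * s 1 n)"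
      by (rule PIY[of _ "\<lambda>(x::real) m. if x = 1 then 1 else 0"]) (auto simp: ev_def indicator_def)
    thus ?thesis by (simp add: b1_def)
  qed
  have iU0: "(\<integral>\<omega>. Y \<omega> * condE M X N \<omega> * indicator (ev M X 0) \<omega> \<partial>M) = a0"
  proof -
    have "(\<integral>\<omega>. Y \<omega> * condE M X N \<omega> * indicator (ev M X 0) \<omega> \<partial>M) = (\<Sum>n\<in>UNIV. (\<lambda>(x::real) m. if x = 0 then xN m else 0) 0 n * s 0 n + (\<lambda>(x::real) m. if x = 0 then xN m else 0) 1 n * s 1 n)"
      by (rule PIY[of _ "\<lambda>(x::real) m. if x = 0 then xN m else 0"]) (auto simp: ev_def indicator_def cXN)
    thus ?thesis by (simp add: a0_def)
  qed
  have iU1: "(\<integral>\<omega>. Y \<omega> * condE M X N \<omega> * indicator (ev M X 1) \<omega> \<partial>M) = a1"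
  proof -
    have "(\<integral>\<omega>. Y \<omega> * condE M X N \<omega> * indicator (ev M X 1) \<omega> \<partial>M) = (\<Sum>n\<in>UNIV. (\<lambda>(x::real) m. if x = 1 then xN m else 0) 0 n * s 0 n + (\<lambda>(x::real) m. if x = 1 then xN m else 0) 1 n * s 1 n)"
      by (rule PIY[of _ "\<lambda>(x::real) m. if x = 1 then xN m else 0"]) (auto simp: ev_def indicator_def cXN)
    thus ?thesis by (simp add: a1_def)
  qed
  have iV0: "(\<integral>\<omega>. condE M X N \<omega> * indicator (ev M X 0) \<omega> \<partial>M) = c0"
  proof -
    have "(\<integral>\<omega>. condE M X N \<omega> * indicator (ev M X 0) \<omega> \<partial>M) = (\<Sum>n\<in>UNIV. (\<lambda>(x::real) m. if x = 0 then xN m else 0) 0 n * q 0 n + (\<lambda>(x::real) m. if x = 0 then xN m else 0) 1 n * q 1 n)"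
      by (rule PI1[of _ "\<lambda>(x::real) m. if x = 0 then xN m else 0"]) (auto simp: ev_def indicator_def cXN)
    thus ?thesis by (simp add: c0_def)
  qed
  have iV1: "(\<integral>\<omega>. condE M X N \<omega> * indicator (ev M X 1) \<omega> \<partial>M) = c1"
  proof -
    have "(\<integral>\<omega>. condE M X N \<omega> * indicator (ev M X 1) \<omega> \<partial>M) = (\<Sum>n\<in>UNIV. (\<lambda>(x::real) m. if x = 1 then xN m else 0) 0 n * q 0 n + (\<lambda>(x::real) m. if x = 1 then xN m else 0) 1 n * q 1 n)"
      by (rule PI1[of _ "\<lambda>(x::real) m. if x = 1 then xN m else 0"]) (auto simp: ev_def indicator_def cXN)
    thus ?thesis by (simp add: c1_def)
  qed
  have q0e: "q 0 n = pi n * (1 - xN n)" for n using e1[of n] by (simp add: pi_def algebra_simps)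
  have Spi: "(\<Sum>n\<in>UNIV. pi n) = 1"
  proof -
    have "integral\<^sup>L M (\<lambda>\<omega>. 1::real) = (\<Sum>n\<in>UNIV. (\<lambda>m. 1) n * pi n)" by (rule PIN) auto
    thus ?thesis by (simp add: prob_space)
  qed
  have p01: "p0 = 1 - p1" using Spi by (simp add: p0_def p1_def pi_def sum.distrib)
  have Sx: "(\<Sum>n\<in>UNIV. xN n * pi n) = p1" unfolding p1_def by (rule sum.cong) (auto simp: e1[symmetric] mult.commute)
  have Sy: "(\<Sum>n\<in>UNIV. yN n * pi n) = b0 + b1" unfolding b0_def b1_def sum.distrib[symmetric]
    by (rule sum.cong) (auto simp: e2[symmetric] mult.commute)
  have Sxy: "(\<Sum>n\<in>UNIV. xN n * yN n * pi n) = a0 + a1" unfolding a0_def a1_def sum.distrib[symmetric]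
    by (rule sum.cong) (auto simp: distrib_left[symmetric] e2[symmetric] mult.commute mult.left_commute)
  have J_xy: "(\<integral>\<omega>. condE M X N \<omega> * condE M Y N \<omega> \<partial>M) = a0 + a1"
  proof -
    have "(\<integral>\<omega>. condE M X N \<omega> * condE M Y N \<omega> \<partial>M) = (\<Sum>n\<in>UNIV. (\<lambda>m. xN m * yN m) n * pi n)"
      by (rule PIN) (auto simp: cXN cYN)
    thus ?thesis using Sxy by simp
  qed
  have J_yx: "(\<integral>\<omega>. condE M Y N \<omega> * condE M X N \<omega> \<partial>M) = a0 + a1"
    using J_xy by (simp add: mult.commute)
  have J_x: "(\<integral>\<omega>. condE M X N \<omega> \<partial>M) = p1"
  proof -
    have "(\<integral>\<omega>. condE M X N \<omega> \<partial>M) = (\<Sum>n\<in>UNIV. (\<lambda>m. xN m) n * pi n)"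
      by (rule PIN) (auto simp: cXN)
    thus ?thesis using Sx by simp
  qed
  have J_y: "(\<integral>\<omega>. condE M Y N \<omega> \<partial>M) = b0 + b1"
  proof -
    have "(\<integral>\<omega>. condE M Y N \<omega> \<partial>M) = (\<Sum>n\<in>UNIV. (\<lambda>m. yN m) n * pi n)"
      by (rule PIN) (auto simp: cYN)
    thus ?thesis using Sy by simp
  qed
  have J_3: "(\<integral>\<omega>. (1 - condE M X N \<omega>) * condE M Y N \<omega> \<partial>M) = (b0 + b1) - (a0 + a1)"
  proof -
    have "(\<integral>\<omega>. (1 - condE M X N \<omega>) * condE M Y N \<omega> \<partial>M) = (\<Sum>n\<in>UNIV. (\<lambda>m. (1 - xN m) * yN m) n * pi n)"
      by (rule PIN) (auto simp: cXN cYN)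
    also have "\<dots> = (\<Sum>n\<in>UNIV. yN n * pi n) - (\<Sum>n\<in>UNIV. xN n * yN n * pi n)"
      by (simp add: sum_subtractf[symmetric] algebra_simps)
    finally show ?thesis using Sy Sxy by simp
  qed
  have J_4: "(\<integral>\<omega>. 1 - condE M X N \<omega> \<partial>M) = 1 - p1"
  proof -
    have "(\<integral>\<omega>. 1 - condE M X N \<omega> \<partial>M) = (\<Sum>n\<in>UNIV. (\<lambda>m. 1 - xN m) n * pi n)"
      by (rule PIN) (auto simp: cXN)
    also have "\<dots> = (\<Sum>n\<in>UNIV. pi n) - (\<Sum>n\<in>UNIV. xN n * pi n)"
      by (simp add: sum_subtractf[symmetric] algebra_simps)
    finally show ?thesis using Spi Sx by simp
  qed
  have J_var: "var M (condE M X N) = c1 - p1^2"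
  proof -
    have "var M (condE M X N) = (\<integral>\<omega>. (condE M X N \<omega> - p1)\<^sup>2 \<partial>M)" unfolding var_def J_x ..
    also have "\<dots> = (\<Sum>n\<in>UNIV. (\<lambda>m. (xN m - p1)\<^sup>2) n * pi n)"
      by (rule PIN) (auto simp: cXN)
    also have "\<dots> = (\<Sum>n\<in>UNIV. xN n * q 1 n - 2 * p1 * q 1 n + p1^2 * pi n)"
      by (rule sum.cong) (auto simp: e1[symmetric] power2_eq_square algebra_simps)
    also have "\<dots> = c1 - 2 * p1 * p1 + p1^2 * 1"
      by (simp add: sum.distrib sum_subtractf sum_distrib_left[symmetric] c1_def p1_def[symmetric] Spi)
    finally show ?thesis by (simp add: power2_eq_square)
  qed
  have J_cov: "cov M (condE M Y N) (condE M X N) = (a0 + a1) - (b0 + b1) * p1"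
    unfolding cov_def J_yx J_y J_x ..
  have J_dB: "(\<integral>\<omega>. condCov M Y X N \<omega> \<partial>M) = b1 - (a0 + a1)"
  proof -
    have "(\<integral>\<omega>. condCov M Y X N \<omega> \<partial>M) = (\<Sum>n\<in>UNIV. (\<lambda>m. yxN m - yN m * xN m) n * pi n)"
      by (rule PIN) (auto simp: condCov_def cXN cYN cYXN)
    also have "\<dots> = (\<Sum>n\<in>UNIV. s 1 n) - (\<Sum>n\<in>UNIV. xN n * yN n * pi n)"
      by (simp add: sum_subtractf[symmetric] algebra_simps e3[symmetric])
    finally show ?thesis using Sxy by (simp add: b1_def)
  qed
  have c01: "c0 = p1 - c1"
  proof -
    have "c0 = (\<Sum>n\<in>UNIV. xN n * pi n - xN n * q 1 n)"
      unfolding c0_def by (rule sum.cong) (auto simp: pi_def algebra_simps)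
    thus ?thesis by (simp add: sum_subtractf Sx c1_def)
  qed
  have cU0: "cexp M (\<lambda>x. Y x * condE M X N x) (ev M X 0) = a0 / p0" by (simp add: cexp_def iU0 mX0)
  have cU1: "cexp M (\<lambda>x. Y x * condE M X N x) (ev M X 1) = a1 / p1" by (simp add: cexp_def iU1 mX1)
  have cW0: "cexp M Y (ev M X 0) = b0 / p0" by (simp add: cexp_def iY0 mX0)
  have cW1: "cexp M Y (ev M X 1) = b1 / p1" by (simp add: cexp_def iY1 mX1)
  have cV0: "cexp M (condE M X N) (ev M X 0) = c0 / p0" by (simp add: cexp_def iV0 mX0)
  have cV1: "cexp M (condE M X N) (ev M X 1) = c1 / p1" by (simp add: cexp_def iV1 mX1)
  define h where "h x = cexp M (\<lambda>x. Y x * condE M X N x) (ev M X x) - cexp M Y (ev M X x) * cexp M (condE M X N) (ev M X x)" for x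
  have J_dW: "(\<integral>\<omega>. condCov M Y (condE M X N) X \<omega> \<partial>M) =
      p0 * (a0/p0 - b0/p0 * (c0/p0)) + p1 * (a1/p1 - b1/p1 * (c1/p1))"
  proof -
    have "(\<integral>\<omega>. condCov M Y (condE M X N) X \<omega> \<partial>M) = (\<Sum>n\<in>UNIV. (\<lambda>x m. h x) 0 n * q 0 n + (\<lambda>x m. h x) 1 n * q 1 n)"
      by (rule PI1[of _ "\<lambda>x m. h x"]) (simp add: condCov_def h_def condE_def[of M _ X])
    also have "\<dots> = h 0 * p0 + h 1 * p1" by (simp add: sum.distrib sum_distrib_left p0_def p1_def)
    finally show ?thesis by (simp add: h_def cU0 cU1 cW0 cW1 cV0 cV1 mult.commute)
  qed
  obtain n0 where n0: "measure M (ev M N n0) > 0" "0 < xN n0" "xN n0 < 1"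
    using assms(6) by (auto simp: xN_def)
  have pin0: "pi n0 > 0" using n0 mN by simp
  have p1pos: "0 < p1"
  proof -
    have "0 < (\<Sum>n\<in>UNIV. xN n * pi n)"
      by (rule sum_pos2[of UNIV n0]) (use pin0 n0 xN01 pinn in auto)
    thus ?thesis using Sx by simp
  qed
  have p1lt: "p1 < 1"
  proof -
    have "0 < (\<Sum>n\<in>UNIV. q 0 n)" unfolding q0e
      by (rule sum_pos2[of UNIV n0]) (use pin0 n0 xN01 pinn in auto)
    thus ?thesis using p01 by (simp add: p0_def)
  qed
  have c1lt: "c1 < p1"
  proof -
    have "0 < (\<Sum>n\<in>UNIV. pi n * xN n * (1 - xN n))"
      by (rule sum_pos2[of UNIV n0]) (use pin0 n0 xN01 pinn in auto)
    also have "\<dots> = (\<Sum>n\<in>UNIV. xN n * pi n - xN n * q 1 n)"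
      by (rule sum.cong) (auto simp: e1[symmetric] algebra_simps)
    also have "\<dots> = p1 - c1" by (simp add: sum_subtractf Sx c1_def)
    finally show ?thesis by simp
  qed
  have Vpos: "0 < c1 - p1^2" using assms(8) J_var by simp
  have prod: "((1-p1) * (a0/(1-p1) - b0/(1-p1) * ((p1 - c1)/(1-p1))) + p1 * (a1/p1 - b1/p1 * (c1/p1))) * (b1 - (a0+a1)) \<ge> 0"
    using assms(9) unfolding J_dW J_dB p01 c01 .
  show ?thesis
    unfolding cW1 cW0 J_cov J_var J_xy J_x J_3 J_4 p01
    by (rule alg[OF p1pos p1lt Vpos c1lt prod])
qed

end
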